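(* Consider the online class matching problem in the divisible setting (described in the context). For every $\gamma \in [0,1]$, there exists an online divisible algorithm that is simultaneously $\left(1 - \frac{e^{\gamma-1}}{\gamma+1}\right)$-USW and $(1-e^{-\gamma})$-CEF.
   Context: Online class matching: an instance is a bipartite graph $G=(N,M,E)$ with a set $N$ of agents (known in advance), a set $M$ of items, and $E \subseteq M \times N$; agent $a$ likes item $o$ iff $(o,a)\in E$. The agents are partitioned into $k$ known classes $N_1,\dots,N_k$. Items arrive one at a time in an adversarially chosen order; when item $o$ arrives, the set of agents liking $o$ is revealed and the algorithm must immediately and irrevocably assign (in the divisible setting, fractions of) $o$ to agents liking it. A fractional matching is $X=(x_{o,a})\in[0,1]^{M\times N}$ supported on $E$ with $\sum_a x_{o,a}\le 1$ for every item $o$ and $\sum_o x_{o,a}\le 1$ for every agent $a$. The value of agent $a$ is $V_a(X)=\sum_o x_{o,a}$ and the class value is $V_i(X)=\sum_{a\in N_i}V_a(X)$. For each class $j$, let $y_j(X)\in[0,1]^M$ with $y_j(X)_o=\sum_{a\in N_j}x_{o,a}$. For $y\in[0,1]^M$, the optimistic valuation $V_i^*(y)$ is the maximum size of a fractional matching using edges of $E$ between $N_i$ and $M$ in which each item $o$ has fractional degree at most $y_o$ and each agent has fractional degree at most $1$. The utilitarian social welfare is $\mathrm{usw}(X)=\sum_i V_i(X)$. A (possibly randomized) online algorithm outputting $X$ is $\alpha$-CEF if on every instance, for all classes $i,j$, $\mathbb{E}[V_i(X)]\ge \alpha\,\mathbb{E}[V_i^*(y_j(X))]$; it is $\beta$-USW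 if on every instance $\mathbb{E}[\mathrm{usw}(X)]\ge \beta\cdot \mathrm{usw}(X^* )$ for every fractional matching $X^*$ of $G$. *)

theory Defs
  imports "HOL-Probability.Probability"
begin

text \<open>The items are the indices 0..<length seq, arriving in this order; item o is
  liked exactly by the agents in seq ! q.\<close>

definition agents :: "'a set list \<Rightarrow> 'a set" where
  "agents cls = \<Union> (set cls)"

definition is_instance :: "'a set list \<Rightarrow> 'a set list \<Rightarrow> bool" where
  "is_instance cls seq \<longleftrightarrow>
     (\<forall>i < length cls. finite (cls ! i)) \<and>
     (\<forall>i < length cls. \<forall>j < length cls. i \<noteq> j \<longrightarrow> cls ! i \<inter> cls ! j = {}) \<and>
     (\<forall>q < length seq. seq ! q \<subseteq> agents cls)"

text \<open>Fractional matching X (X o a = fraction of item o given to agent a) supported on E.\<close>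
definition frac_matching :: "'a set list \<Rightarrow> 'a set list \<Rightarrow> (nat \<Rightarrow> 'a \<Rightarrow> real) \<Rightarrow> bool" where
  "frac_matching cls seq X \<longleftrightarrow>
     (\<forall>q a. 0 \<le> X q a \<and> X q a \<le> 1) \<and>
     (\<forall>q a. X q a \<noteq> 0 \<longrightarrow> q < length seq \<and> a \<in> seq !  q) \<and>
     (\<forall>q. (\<Sum>a\<in>agents cls. X q a) \<le> 1) \<and>
     (\<forall>a. (\<Sum>q<length seq. X q a) \<le> 1)"

definition agent_value :: "'a set list \<Rightarrow> (nat \<Rightarrow> 'a \<Rightarrow> real) \<Rightarrow> 'a \<Rightarrow> real" where
  "agent_value seq X a = (\<Sum>q<length seq. X q a)"

definition class_value :: "'a set list \<Rightarrow> 'a set list \<Rightarrow> (nat \<Rightarrow> 'a \<Rightarrow> real) \<Rightarrow> nat \<Rightarrow> real" where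
  "class_value cls seq X i = (\<Sum>a\<in>cls ! i. agent_value seq X a)"

definition usw :: "'a set list \<Rightarrow> 'a set list \<Rightarrow> (nat \<Rightarrow> 'a \<Rightarrow> real) \<Rightarrow> real" where
  "usw cls seq X = (\<Sum>i<length cls. class_value cls seq X i)"

definition class_alloc :: "'a set list \<Rightarrow> (nat \<Rightarrow> 'a \<Rightarrow> real) \<Rightarrow> nat \<Rightarrow> nat \<Rightarrow> real" where
  "class_alloc cls X j q = (\<Sum>a\<in>cls ! j. X q a)"

text \<open>Optimistic valuation V_i^*(y): the maximum size of a fractional matching between
  class i and the items, using edges of E, with item capacities y and agent capacities 1.\<close>
definition opt_val :: "'a set list \<Rightarrow> 'a set list \<Rightarrow> nat \<Rightarrow> (nat \<Rightarrow> real) \<Rightarrow> real" where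
  "opt_val cls seq i y = Sup {(\<Sum>q<length seq. \<Sum>a\<in>cls ! i. z q a) | z.
      (\<forall>q a. 0 \<le> z q a) \<and>
      (\<forall>q a. z q a \<noteq> 0 \<longrightarrow> q < length seq \<and> a \<in> seq ! q \<and> a \<in> cls ! i) \<and>
      (\<forall>q < length seq. (\<Sum>a\<in>cls ! i. z q a) \<le> y  q) \<and>
      (\<forall>a \<in> cls ! i. (\<Sum>q<length seq. z q a) \<le> 1)}"

text \<open>A deterministic online divisible algorithm: given the (known) classes and the prefix
  of arrived items (neighbour sets, current item last), it outputs the split of the
  current item among the agents.  Being a function of the prefix only makes it online.\<close>
type_synonym 'a online_alg = "'a set list \<Rightarrow> 'a set list \<Rightarrow> 'a \<Rightarrow> real"

definition run :: "'a online_alg \<Rightarrow> 'a set list \<Rightarrow> 'a set list \<Rightarrow> nat \<Rightarrow> 'a \<Rightarrow> real" where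
  "run alg cls seq q a = (if q < length seq then alg cls (take (Suc  q) seq) a else 0)"

definition valid_online_alg :: "'a online_alg \<Rightarrow> bool" where
  "valid_online_alg alg \<longleftrightarrow>
     (\<forall>cls seq. is_instance cls seq \<longrightarrow> frac_matching cls seq (run alg cls seq))"

definition valid_rand_alg :: "'a online_alg pmf \<Rightarrow> bool" where
  "valid_rand_alg P \<longleftrightarrow> (\<forall>alg \<in> set_pmf P. valid_online_alg alg)"

definition is_CEF :: "real \<Rightarrow> 'a online_alg pmf \<Rightarrow> bool" where
  "is_CEF \<alpha> P \<longleftrightarrow> (\<forall>cls seq. is_instance cls seq \<longrightarrow>
     (\<forall>i < length cls. \<forall>j < length cls.
        measure_pmf.expectation P (\<lambda>alg. class_value cls seq (run alg cls seq) i)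
        \<ge> \<alpha> * measure_pmf.expectation P
              (\<lambda>alg. opt_val cls seq i (class_alloc cls (run alg cls seq) j))))"

definition is_USW :: "real \<Rightarrow> 'a online_alg pmf \<Rightarrow> bool" where
  "is_USW \<beta> P \<longleftrightarrow> (\<forall>cls seq. is_instance cls seq \<longrightarrow>
     (\<forall>Xs. frac_matching cls seq Xs \<longrightarrow>
        measure_pmf.expectation P (\<lambda>alg. usw cls seq (run alg cls seq)) \<ge> \<beta> * usw cls seq Xs))"

end

theory Submission
  imports Defs
begin

lemma water:
  fixes x :: "'a \<Rightarrow> real"
  assumes "finite A" "\<forall>a\<in>A. 0 \<le> x a" "0 \<le> c" "0 \<le> m"
    "m \<le> (\<Sum>a\<in>A. max 0 (c - x a))"
  shows "\<exists>L. 0 \<le> L \<and> L \<le> c \<and> (\<Sum>a\<in>A. max 0 (L - x a)) = m \<and>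
           (m = (\<Sum>a\<in>A. max 0 (c - x a)) \<longrightarrow> L = c)"
proof (cases "m = (\<Sum>a\<in>A. max 0 (c - x a))")
  case True
  then show ?thesis using assms by auto
next
  case False
  have g0: "(\<Sum>a\<in>A. max 0 (0 - x a)) = 0"
    using assms(2) by (intro sum.neutral) auto
  have "continuous_on {0..c} (\<lambda>L. \<Sum>a\<in>A. max 0 (L - x a))"
    by (intro continuous_intros)
  then obtain L where "0 \<le> L" "L \<le> c" "(\<Sum>a\<in>A. max 0 (L - x a)) = m"
    using IVT'[of "\<lambda>L. \<Sum>a\<in>A. max 0 (L - x a)" 0 m c] g0 assms by auto
  then show ?thesis using False by auto
qed

definition cidx :: "'a set list \<Rightarrow> 'a \<Rightarrow> nat" where
  "cidx cls a = (SOME i. i < length cls \<and> a \<in> cls ! i)"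

lemma cidx_eq:
  assumes "\<forall>i<length cls. \<forall>j<length cls. i \<noteq> j \<longrightarrow> cls ! i \<inter> cls ! j = {}"
    "i < length cls" "a \<in> cls ! i"
  shows "cidx cls a = i"
proof -
  have "cidx cls a < length cls \<and> a \<in> cls ! cidx cls a"
    unfolding cidx_def by (rule someI[of _ i]) (use assms in auto)
  then show ?thesis using assms by blast
qed

definition spec :: "'a set list \<Rightarrow> real \<Rightarrow> ('a \<Rightarrow> real) \<Rightarrow> 'a set \<Rightarrow> ('a \<Rightarrow> real) \<Rightarrow> ('a \<Rightarrow> real) \<Rightarrow> bool" where
  "spec cls \<gamma> x S d1 d2 \<longleftrightarrow>
   (\<forall>a. 0 \<le> d1 a \<and> 0 \<le> d2 a) \<and>
   (\<forall>a. a \<notin> S \<longrightarrow> d1 a = 0 \<and> d2 a = 0) \<and>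
   (\<forall>a\<in>S. x a + d1 a + d2 a \<le> 1) \<and>
   (\<forall>a. 0 < d1 a \<longrightarrow> x a + d1 a \<le> \<gamma>) \<and>
   (\<forall>a. 0 < d2 a \<longrightarrow> \<gamma> \<le> x a + d1 a) \<and>
   (\<Sum>a\<in>S. d1 a + d2 a) \<le> 1 \<and>
   (((\<Sum>a\<in>S. d1 a) = 1 \<and> (\<forall>a. d2 a = 0)) \<or>
    (\<exists>L. \<gamma> \<le> L \<and> L \<le> 1 \<and> (\<forall>a\<in>S. L \<le> x a + d1 a + d2 a) \<and>
         (\<forall>a. 0 < d2 a \<longrightarrow> x a + d1 a + d2 a \<le> L) \<and>
         ((\<Sum>a\<in>S. d1 a + d2 a) = 1 \<or> L = 1))) \<and>
   (\<forall>i<length cls. \<exists>Li. 0 \<le> Li \<and> Li \<le> \<gamma> \<and> (\<forall>a\<in>S \<inter> cls ! i. Li \<le> x a + d1 a) \<and>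
       (\<forall>a\<in>cls ! i. 0 < d1 a \<longrightarrow> x a + d1 a \<le> Li) \<and>
       ((\<exists>a\<in>S \<inter> cls ! i. x a + d1 a + d2 a < \<gamma>) \<longrightarrow>
          (\<forall>j<length cls. (\<Sum>a\<in>cls ! j. d1 a + d2 a) \<le> (\<Sum>a\<in>cls ! i. d1 a))))"

lemma finite_agents:
  assumes "\<forall>i<length cls. finite (cls ! i)"
  shows "finite (agents cls)"
  using assms unfolding agents_def by (intro finite_Union) (auto simp: in_set_conv_nth)

lemma agents_eq: "agents cls = (\<Union>i\<in>{..<length cls}. cls ! i)"
  unfolding agents_def set_conv_nth by auto

lemma sum_over_classes:
  fixes f :: "'a \<Rightarrow> real"
  assumes "\<forall>i<length cls. finite (cls ! i)"
    "\<forall>i<length cls. \<forall>j<length cls. i \<noteq> j \<longrightarrow> cls ! i \<inter> cls ! j = {}"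
    "S \<subseteq> agents cls"
  shows "(\<Sum>a\<in>S. f a) = (\<Sum>i<length cls. \<Sum>a\<in>S \<inter> cls ! i. f a)"
proof -
  have "S = (\<Union>i\<in>{..<length cls}. S \<inter> cls ! i)"
    using assms(3) agents_eq[of cls] by auto
  then have "(\<Sum>a\<in>S. f a) = (\<Sum>a\<in>(\<Union>i\<in>{..<length cls}. S \<inter> cls ! i). f a)" by simp
  also have "\<dots> = (\<Sum>i<length cls. \<Sum>a\<in>S \<inter> cls ! i. f a)"
    by (rule sum.UNION_disjoint) (use assms(1,2) in auto)
  finally show ?thesis .
qed

lemma sum_restrict_support:
  fixes f :: "'a \<Rightarrow> real"
  assumes "finite B" "\<forall>a. a \<notin> S \<longrightarrow> f a = 0"
  shows "(\<Sum>a\<in>B. f a) = (\<Sum>a\<in>B \<inter> S. f a)"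
  by (rule sum.mono_neutral_right) (use assms in auto)

lemma spec_exists:
  fixes x :: "'a \<Rightarrow> real"
  assumes fin: "\<forall>i<length cls. finite (cls ! i)"
    and disj: "\<forall>i<length cls. \<forall>j<length cls. i \<noteq> j \<longrightarrow> cls ! i \<inter> cls ! j = {}"
    and SA: "S \<subseteq> agents cls" and x01: "\<forall>a. 0 \<le> x a \<and> x a \<le> 1"
    and g0: "0 \<le> \<gamma>" and g1: "\<gamma> \<le> 1"
  shows "\<exists>d1 d2. spec cls \<gamma> x S d1 d2"
proof -
  define n where "n = length cls"
  define A where "A i = S \<inter> cls ! i" for i
  have finS: "finite S" using finite_agents[OF fin] SA finite_subset by blast
  have finA: "finite (A i)" for i using finS unfolding A_def by auto
  define cap where "cap i = (\<Sum>a\<in>A i. max 0 (\<gamma> - x a))" for i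
  have cap0: "0 \<le> cap i" for i unfolding cap_def by (intro sum_nonneg) auto
  define T where "T = (\<Sum>i<n. cap i)"
  have capT: "cap i \<le> T" if "i < n" for i
    unfolding T_def using that cap0 by (intro member_le_sum) auto
  obtain s where s0: "0 \<le> s" and sT1: "1 \<le> T \<Longrightarrow> (\<Sum>i<n. min s (cap i)) = 1"
      and sT2: "T < 1 \<Longrightarrow> \<forall>i<n. cap i \<le> s"
  proof (cases "1 \<le> T")
    case True
    have h0: "(\<Sum>i<n. min 0 (cap i)) = 0" using cap0 by (intro sum.neutral) (auto simp: min_def)
    have h1: "1 \<le> (\<Sum>i<n. min 1 (cap i))"
    proof (cases "\<exists>i<n. 1 \<le> cap i")
      case True
      then obtain i where "i < n" "1 \<le> cap i" by auto
      then have "min 1 (cap i) \<le> (\<Sum>i<n. min 1 (cap i))"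
        using cap0 by (intro member_le_sum) auto
      then show ?thesis using \<open>1 \<le> cap i\<close> by auto
    next
      case False
      then have "(\<Sum>i<n. min 1 (cap i)) = T" unfolding T_def by (intro sum.cong) auto
      then show ?thesis using \<open>1 \<le> T\<close> by simp
    qed
    have "continuous_on {0..1} (\<lambda>s. \<Sum>i<n. min s (cap i))"
      by (intro continuous_intros)
    then obtain s where "0 \<le> s" "s \<le> 1" "(\<Sum>i<n. min s (cap i)) = 1"
      using IVT'[of "\<lambda>s. \<Sum>i<n. min s (cap i)" 0 1 1] h0 h1 by auto
    then show ?thesis using that True by auto
  next
    case False
    show ?thesis
    proof (rule that[of 1])
      show "0 \<le> (1::real)" by simp
      show "1 \<le> T \<Longrightarrow> (\<Sum>i<n. min 1 (cap i)) = 1" using False by simp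
      show "T < 1 \<Longrightarrow> \<forall>i<n. cap i \<le> 1"
      proof (intro allI impI)
        fix i assume "T < 1" "i < n"
        then show "cap i \<le> 1" using capT[of i] by simp
      qed
    qed
  qed
  define si where "si i = min s (cap i)" for i
  have "\<forall>i\<in>{..<n}. \<exists>L. 0 \<le> L \<and> L \<le> \<gamma> \<and> (\<Sum>a\<in>A i. max 0 (L - x a)) = si i \<and>
           (si i = cap i \<longrightarrow> L = \<gamma>)"
  proof
    fix i assume "i \<in> {..<n}"
    show "\<exists>L. 0 \<le> L \<and> L \<le> \<gamma> \<and> (\<Sum>a\<in>A i. max 0 (L - x a)) = si i \<and> (si i = cap i \<longrightarrow> L = \<gamma>)"
      using water[of "A i" x \<gamma> "si i"] finA x01 g0 s0 cap0[of i]
      unfolding si_def cap_def by auto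
  qed
  from bchoice[OF this] obtain Lf where Lf: "\<forall>i\<in>{..<n}. 0 \<le> Lf i \<and> Lf i \<le> \<gamma> \<and>
       (\<Sum>a\<in>A i. max 0 (Lf i - x a)) = si i \<and> (si i = cap i \<longrightarrow> Lf i = \<gamma>)"
    by blast
  have Lf0: "\<And>i. i < n \<Longrightarrow> 0 \<le> Lf i" and Lf1: "\<And>i. i < n \<Longrightarrow> Lf i \<le> \<gamma>"
    and Lfs: "\<And>i. i < n \<Longrightarrow> (\<Sum>a\<in>A i. max 0 (Lf i - x a)) = si i"
    and Lfc: "\<And>i. i < n \<Longrightarrow> si i = cap i \<Longrightarrow> Lf i = \<gamma>"
    using Lf by auto
  define d1 where "d1 a = (if a \<in> S then max 0 (Lf (cidx cls a) - x a) else 0)" for a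
  have inS: "\<exists>i<n. a \<in> cls ! i" if "a \<in> S" for a
    using that SA agents_eq[of cls] unfolding n_def by auto
  have d1A: "d1 a = max 0 (Lf i - x a)" if "i < n" "a \<in> A i" for i a
    using that cidx_eq[OF disj, of i a] unfolding d1_def A_def n_def by auto
  have d1nn: "0 \<le> d1 a" for a unfolding d1_def by auto
  have d1out: "a \<notin> S \<Longrightarrow> d1 a = 0" for a unfolding d1_def by auto
  have d1pos: "x a + d1 a = Lf i" if "i < n" "a \<in> A i" "0 < d1 a" for i a
    using d1A[OF that(1,2)] that(3) by (auto simp: max_def split: if_splits)
  have d1ge: "Lf i \<le> x a + d1 a" if "i < n" "a \<in> A i" for i a
    using d1A[OF that] by auto
  have d1le: "x a + d1 a \<le> \<gamma>" if "0 < d1 a" for a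
  proof -
    have "a \<in> S" using that d1out by force
    then obtain i where "i < n" "a \<in> cls ! i" using inS by blast
    then have "a \<in> A i" using \<open>a \<in> S\<close> unfolding A_def by auto
    then show ?thesis using d1pos[OF \<open>i < n\<close> _ that] Lf1[OF \<open>i < n\<close>] by auto
  qed
  have sumA: "(\<Sum>a\<in>A i. d1 a) = si i" if "i < n" for i
    using Lfs[OF that] d1A[OF that] by (metis (no_types, lifting) sum.cong)
  have sumS: "(\<Sum>a\<in>S. f a) = (\<Sum>i<n. \<Sum>a\<in>A i. f a)" for f :: "'a \<Rightarrow> real"
    using sum_over_classes[OF fin disj SA] unfolding n_def A_def by blast
  have sumS1: "(\<Sum>a\<in>S. d1 a) = (\<Sum>i<n. si i)" using sumS sumA by simp
  have sumcls: "(\<Sum>a\<in>cls ! j. f a) = (\<Sum>a\<in>A j. f a)" if "j < n" "\<forall>a. a \<notin> S \<longrightarrow> f a = 0"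
    for j and f :: "'a \<Rightarrow> real"
    using sum_restrict_support[of "cls ! j" S f] fin that unfolding A_def n_def
    by (simp add: Int_commute)
  show ?thesis
  proof (cases "1 \<le> T")
    case True
    define d2 where "d2 (a::'a) = (0::real)" for a
    have tot: "(\<Sum>a\<in>S. d1 a) = 1" using sumS1 sT1[OF True] unfolding si_def by simp
    have f1: "\<forall>a. 0 \<le> d1 a \<and> 0 \<le> d2 a" using d1nn unfolding d2_def by auto
    have f2: "\<forall>a. a \<notin> S \<longrightarrow> d1 a = 0 \<and> d2 a = 0" using d1out unfolding d2_def by auto
    have f3: "\<forall>a\<in>S. x a + d1 a + d2 a \<le> 1"
    proof
      fix a show "x a + d1 a + d2 a \<le> 1"
        using d1le[of a] g1 x01 d1nn[of a] unfolding d2_def by (cases "0 < d1 a") auto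
    qed
    have f4: "\<forall>a. 0 < d1 a \<longrightarrow> x a + d1 a \<le> \<gamma>" using d1le by auto
    have f5: "\<forall>a. 0 < d2 a \<longrightarrow> \<gamma> \<le> x a + d1 a" unfolding d2_def by auto
    have f6: "(\<Sum>a\<in>S. d1 a + d2 a) \<le> 1" using tot unfolding d2_def by simp
    have f7: "(\<Sum>a\<in>S. d1 a) = 1 \<and> (\<forall>a. d2 a = 0) \<or>
        (\<exists>L. \<gamma> \<le> L \<and> L \<le> 1 \<and> (\<forall>a\<in>S. L \<le> x a + d1 a + d2 a) \<and>
             (\<forall>a. 0 < d2 a \<longrightarrow> x a + d1 a + d2 a \<le> L) \<and>
             ((\<Sum>a\<in>S. d1 a + d2 a) = 1 \<or> L = 1))"
        using tot unfolding d2_def by simp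
    have f8: "\<forall>i<length cls. \<exists>Li. 0 \<le> Li \<and> Li \<le> \<gamma> \<and> (\<forall>a\<in>S \<inter> cls ! i. Li \<le> x a + d1 a) \<and>
       (\<forall>a\<in>cls ! i. 0 < d1 a \<longrightarrow> x a + d1 a \<le> Li) \<and>
       ((\<exists>a\<in>S \<inter> cls ! i. x a + d1 a + d2 a < \<gamma>) \<longrightarrow>
          (\<forall>j<length cls. (\<Sum>a\<in>cls ! j. d1 a + d2 a) \<le> (\<Sum>a\<in>cls ! i. d1 a)))"
    proof (intro allI impI)
      fix i assume i: "i < length cls"
      show "\<exists>Li. 0 \<le> Li \<and> Li \<le> \<gamma> \<and> (\<forall>a\<in>S \<inter> cls ! i. Li \<le> x a + d1 a) \<and>
              (\<forall>a\<in>cls ! i. 0 < d1 a \<longrightarrow> x a + d1 a \<le> Li) \<and>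
              ((\<exists>a\<in>S \<inter> cls ! i. x a + d1 a + d2 a < \<gamma>) \<longrightarrow>
               (\<forall>j<length cls. (\<Sum>a\<in>cls ! j. d1 a + d2 a) \<le> (\<Sum>a\<in>cls ! i. d1 a)))"
      proof (intro exI[of _ "Lf i"] conjI ballI impI allI)
        show "0 \<le> Lf i" "Lf i \<le> \<gamma>" using Lf0 Lf1 i unfolding n_def by auto
        show "Lf i \<le> x a + d1 a" if "a \<in> S \<inter> cls ! i" for a
          using d1ge[of i a] i that unfolding A_def n_def by auto
        show "x a + d1 a \<le> Lf i" if "a \<in> cls ! i" "0 < d1 a" for a
        proof -
          have "a \<in> S" using that d1out by force
          then show ?thesis using d1pos[of i a] i that unfolding A_def n_def by auto
        qed
        fix j assume j: "j < length cls"
        assume "\<exists>a\<in>S \<inter> cls ! i. x a + d1 a + d2 a < \<gamma>"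
        then obtain a where a: "a \<in> S \<inter> cls ! i" "x a + d1 a < \<gamma>" unfolding d2_def by auto
        have "Lf i < \<gamma>" using d1ge[of i a] a i unfolding A_def n_def by auto
        then have "si i \<noteq> cap i" using Lfc[of i] i unfolding n_def by auto
        then have sis: "si i = s" unfolding si_def by (auto simp: min_def split: if_splits)
        have "(\<Sum>a\<in>cls ! j. d1 a + d2 a) = (\<Sum>a\<in>A j. d1 a)"
          using sumcls[of j "\<lambda>a. d1 a + d2 a"] j d1out unfolding d2_def n_def by simp
        also have "\<dots> = si j" using sumA j unfolding n_def by simp
        also have "\<dots> \<le> si i" using sis unfolding si_def by simp
        also have "\<dots> = (\<Sum>a\<in>cls ! i. d1 a)"
          using sumcls[of i d1] sumA[of i] i d1out unfolding n_def by simp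
        finally show "(\<Sum>a\<in>cls ! j. d1 a + d2 a) \<le> (\<Sum>a\<in>cls ! i. d1 a)" .
      qed
    qed
    have "spec cls \<gamma> x S d1 d2" unfolding spec_def by (intro conjI f1 f2 f3 f4 f5 f6 f7 f8)
    then show ?thesis by blast
  next
    case False
    have sic: "si i = cap i" if "i < n" for i using sT2 False that unfolding si_def by auto
    have Lfg: "Lf i = \<gamma>" if "i < n" for i using Lfc sic that by auto
    have d1g: "d1 a = max 0 (\<gamma> - x a)" if aS: "a \<in> S" for a
    proof -
      obtain i where "i < n" "a \<in> cls ! i" using inS aS by blast
      then show ?thesis using d1A[of i a] Lfg aS unfolding A_def by auto
    qed
    define z where "z a = x a + d1 a" for a
    have zg: "a \<in> S \<Longrightarrow> z a = max (x a) \<gamma>" for a unfolding z_def using d1g by auto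
    have z01: "0 \<le> z a \<and> z a \<le> 1" if "a \<in> S" for a
      using zg[OF that] x01[rule_format, of a] g1 by (auto simp: max_def)
    have sumT: "(\<Sum>a\<in>S. d1 a) = T" using sumS1 sic unfolding T_def by simp
    define r where "r = 1 - T"
    have r0: "0 < r" using False unfolding r_def by simp
    define room where "room = (\<Sum>a\<in>S. max 0 (1 - z a))"
    obtain d2 L where d2nn: "\<forall>a. 0 \<le> d2 a" and d2out: "\<forall>a. a \<notin> S \<longrightarrow> d2 a = 0"
      and d2z: "\<forall>a\<in>S. d2 a = max 0 (L - z a)" and L1: "L \<le> 1" and Lg: "\<gamma> \<le> L"
      and tot: "(\<Sum>a\<in>S. d2 a) \<le> r" and alt: "(\<Sum>a\<in>S. d2 a) = r \<or> L = 1"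
    proof (cases "room \<le> r")
      case True
      define e2 where "e2 a = (if a \<in> S then max 0 (1 - z a) else 0)" for a
      have e: "(\<Sum>a\<in>S. e2 a) = room"
        unfolding room_def e2_def by (rule sum.cong) simp_all
      show ?thesis
      proof (rule that[of e2 1])
        show "\<forall>a. 0 \<le> e2 a" unfolding e2_def by simp
        show "\<forall>a. a \<notin> S \<longrightarrow> e2 a = 0" unfolding e2_def by simp
        show "\<forall>a\<in>S. e2 a = max 0 (1 - z a)" unfolding e2_def by simp
        show "(1::real) \<le> 1" by simp
        show "\<gamma> \<le> 1" using g1 .
        show "(\<Sum>a\<in>S. e2 a) \<le> r" using e True by simp
        show "(\<Sum>a\<in>S. e2 a) = r \<or> (1::real) = 1" by simp
      qed
    next
      case False
      have "\<forall>a\<in>S. 0 \<le> z a" using z01 by blast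
      then obtain L where L: "0 \<le> L" "L \<le> 1" "(\<Sum>a\<in>S. max 0 (L - z a)) = r"
        using water[of S z 1 r] finS r0 False unfolding room_def by force
      have "\<gamma> \<le> L"
      proof (rule ccontr)
        assume nL: "\<not> \<gamma> \<le> L"
        have "(\<Sum>a\<in>S. max 0 (L - z a)) = 0"
        proof (rule sum.neutral, rule ballI)
          fix a assume "a \<in> S"
          then have "\<gamma> \<le> z a" using zg by simp
          then show "max 0 (L - z a) = 0" using nL by simp
        qed
        then show False using L r0 by simp
      qed
      define e2 where "e2 a = (if a \<in> S then max 0 (L - z a) else 0)" for a
      have e: "(\<Sum>a\<in>S. e2 a) = r"
        using L(3) unfolding e2_def by (simp cong: sum.cong)
      show ?thesis
      proof (rule that[of e2 L])
        show "\<forall>a. 0 \<le> e2 a" unfolding e2_def by simp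
        show "\<forall>a. a \<notin> S \<longrightarrow> e2 a = 0" unfolding e2_def by simp
        show "\<forall>a\<in>S. e2 a = max 0 (L - z a)" unfolding e2_def by simp
        show "L \<le> 1" using L by simp
        show "\<gamma> \<le> L" by fact
        show "(\<Sum>a\<in>S. e2 a) \<le> r" using e by simp
        show "(\<Sum>a\<in>S. e2 a) = r \<or> L = 1" using e by simp
      qed
    qed
    have sum12: "(\<Sum>a\<in>S. d1 a + d2 a) = T + (\<Sum>a\<in>S. d2 a)"
      using sumT by (simp add: sum.distrib)
    have f1: "\<forall>a. 0 \<le> d1 a \<and> 0 \<le> d2 a" using d1nn d2nn by auto
    have f2: "\<forall>a. a \<notin> S \<longrightarrow> d1 a = 0 \<and> d2 a = 0" using d1out d2out by auto
    have f3: "\<forall>a\<in>S. x a + d1 a + d2 a \<le> 1"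
    proof
      fix a assume "a \<in> S" then show "x a + d1 a + d2 a \<le> 1"
        using d2z z01[of a] L1 unfolding z_def by auto
    qed
    have f4: "\<forall>a. 0 < d1 a \<longrightarrow> x a + d1 a \<le> \<gamma>" using d1le by auto
    have f5: "\<forall>a. 0 < d2 a \<longrightarrow> \<gamma> \<le> x a + d1 a"
    proof (intro allI impI)
      fix a assume "0 < d2 a"
      then have "a \<in> S" using d2out by force
      then show "\<gamma> \<le> x a + d1 a" using zg unfolding z_def by auto
    qed
    have f6: "(\<Sum>a\<in>S. d1 a + d2 a) \<le> 1" using sum12 tot unfolding r_def by simp
    have f7: "(\<Sum>a\<in>S. d1 a) = 1 \<and> (\<forall>a. d2 a = 0) \<or>
        (\<exists>L. \<gamma> \<le> L \<and> L \<le> 1 \<and> (\<forall>a\<in>S. L \<le> x a + d1 a + d2 a) \<and>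
             (\<forall>a. 0 < d2 a \<longrightarrow> x a + d1 a + d2 a \<le> L) \<and>
             ((\<Sum>a\<in>S. d1 a + d2 a) = 1 \<or> L = 1))"
      proof (rule disjI2, rule exI[of _ L], intro conjI allI ballI impI)
        show "\<gamma> \<le> L" "L \<le> 1" using Lg L1 by auto
        show "L \<le> x a + d1 a + d2 a" if "a \<in> S" for a using d2z that unfolding z_def by auto
        show "x a + d1 a + d2 a \<le> L" if "0 < d2 a" for a
        proof -
          have "a \<in> S" using that d2out by force
          then show ?thesis using d2z that unfolding z_def by (auto simp: max_def split: if_splits)
        qed
        show "(\<Sum>a\<in>S. d1 a + d2 a) = 1 \<or> L = 1" using alt sum12 unfolding r_def by auto
      qed
    have f8: "\<forall>i<length cls. \<exists>Li. 0 \<le> Li \<and> Li \<le> \<gamma> \<and> (\<forall>a\<in>S \<inter> cls ! i. Li \<le> x a + d1 a) \<and>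
       (\<forall>a\<in>cls ! i. 0 < d1 a \<longrightarrow> x a + d1 a \<le> Li) \<and>
       ((\<exists>a\<in>S \<inter> cls ! i. x a + d1 a + d2 a < \<gamma>) \<longrightarrow>
          (\<forall>j<length cls. (\<Sum>a\<in>cls ! j. d1 a + d2 a) \<le> (\<Sum>a\<in>cls ! i. d1 a)))"
    proof (intro allI impI)
      fix i assume i: "i < length cls"
      show "\<exists>Li. 0 \<le> Li \<and> Li \<le> \<gamma> \<and> (\<forall>a\<in>S \<inter> cls ! i. Li \<le> x a + d1 a) \<and>
              (\<forall>a\<in>cls ! i. 0 < d1 a \<longrightarrow> x a + d1 a \<le> Li) \<and>
              ((\<exists>a\<in>S \<inter> cls ! i. x a + d1 a + d2 a < \<gamma>) \<longrightarrow>
               (\<forall>j<length cls. (\<Sum>a\<in>cls ! j. d1 a + d2 a) \<le> (\<Sum>a\<in>cls ! i. d1 a)))"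
      proof (intro exI[of _ \<gamma>] conjI ballI impI allI)
        show "0 \<le> \<gamma>" "\<gamma> \<le> \<gamma>" using g0 by auto
        show "\<gamma> \<le> x a + d1 a" if "a \<in> S \<inter> cls ! i" for a using zg that unfolding z_def by auto
        show "x a + d1 a \<le> \<gamma>" if "a \<in> cls ! i" "0 < d1 a" for a using d1le that(2) .
        fix j
        assume "\<exists>a\<in>S \<inter> cls ! i. x a + d1 a + d2 a < \<gamma>"
        then obtain a where a: "a \<in> S" "x a + d1 a + d2 a < \<gamma>" by blast
        have "0 \<le> d2 a" using d2nn by blast
        then have False using zg[OF a(1)] a(2) unfolding z_def by (auto simp: max_def split: if_splits)
        then show "(\<Sum>a\<in>cls ! j. d1 a + d2 a) \<le> (\<Sum>a\<in>cls ! i. d1 a)" by simp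
      qed
    qed
    have "spec cls \<gamma> x S d1 d2" unfolding spec_def by (intro conjI f1 f2 f3 f4 f5 f6 f7 f8)
    then show ?thesis by blast
  qed
qed

definition Kc :: "real \<Rightarrow> real" where
  "Kc g = exp (g - 1) / (1 + g - exp (g - 1))"

definition Psi :: "real \<Rightarrow> real \<Rightarrow> real" where
  "Psi g t = (if t \<le> g then Kc g * t else (1 + Kc g) * exp (t - 1) - Kc g)"

lemma exp_diff_le:
  fixes a b :: real
  assumes "a \<le> b"
  shows "exp b - exp a \<le> (b - a) * exp b"
proof -
  have "1 + (a - b) \<le> exp (a - b)" by (rule exp_ge_add_one_self)
  then have "exp b * (1 + (a - b)) \<le> exp b * exp (a - b)" by (simp add: mult_left_mono)
  also have "exp b * exp (a - b) = exp a" by (simp add: exp_add[symmetric])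
  finally show ?thesis by (simp add: algebra_simps)
qed

context
  fixes g :: real
  assumes g0: "0 \<le> g" and g1: "g \<le> 1"
begin

lemma den_pos: "0 < 1 + g - exp (g - 1)"
proof (cases "g = 0")
  case True
  then show ?thesis by simp
next
  case False
  then have "0 < g" using g0 by simp
  moreover have "exp (g - 1) \<le> 1" using g1 by simp
  ultimately show ?thesis by linarith
qed

lemma K_nonneg: "0 \<le> Kc g"
  unfolding Kc_def using den_pos by simp

lemma K_id: "(1 + Kc g) * exp (g - 1) - Kc g = Kc g * g"
proof -
  define E where "E = exp (g - 1)"
  define D where "D = 1 + g - E"
  have d: "D \<noteq> 0" using den_pos unfolding D_def E_def by simp
  have "(1 + E / D) * E - E / D = ((D + E) * E - E) / D" using d by (simp add: field_simps)
  also have "\<dots> = ((1 + g) * E - E) / D" unfolding D_def by simp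
  also have "\<dots> = E / D * g" by (simp add: algebra_simps)
  finally show ?thesis unfolding Kc_def E_def[symmetric] D_def[symmetric] .
qed

lemma ratio_eq: "1 - exp (g - 1) / (g + 1) = 1 / (1 + Kc g)"
proof -
  define E where "E = exp (g - 1)"
  define D where "D = 1 + g - E"
  have d: "0 < D" using den_pos unfolding D_def E_def by simp
  have d2: "0 < g + 1" using g0 by simp
  have "1 + E / D = (1 + g) / D" using d unfolding D_def by (simp add: field_simps)
  then have "1 / (1 + E / D) = D / (1 + g)" using d d2 by simp
  also have "\<dots> = 1 - E / (g + 1)" using d2 unfolding D_def by (simp add: field_simps)
  finally show ?thesis unfolding Kc_def E_def[symmetric] D_def[symmetric] by simp
qed

lemma Psi_hi: "g \<le> t \<Longrightarrow> Psi g t = (1 + Kc g) * exp (t - 1) - Kc g"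
  unfolding Psi_def using K_id by auto

lemma Psi_lo: "t \<le> g \<Longrightarrow> Psi g t = Kc g * t"
  unfolding Psi_def by auto

lemma Psi_mono: assumes "s \<le> t" shows "Psi g s \<le> Psi g t"
proof (cases "t \<le> g")
  case True
  then show ?thesis using assms Psi_lo K_nonneg by (simp add: mult_left_mono)
next
  case False
  then have t: "Psi g t = (1 + Kc g) * exp (t - 1) - Kc g" using Psi_hi by simp
  show ?thesis
  proof (cases "s \<le> g")
    case True
    then have "Psi g s \<le> Psi g g" using Psi_lo K_nonneg by (simp add: mult_left_mono)
    also have "Psi g g = (1 + Kc g) * exp (g - 1) - Kc g" using Psi_hi by simp
    also have "\<dots> \<le> (1 + Kc g) * exp (t - 1) - Kc g"
      using False K_nonneg by (intro diff_right_mono mult_left_mono) auto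
    finally show ?thesis using t by simp
  next
    case False
    then show ?thesis using t Psi_hi[of s] assms K_nonneg
      by (simp add: mult_left_mono)
  qed
qed

lemma Psi_0: "Psi g 0 = 0" using Psi_lo g0 by simp

lemma Psi_1: "Psi g 1 = 1" using Psi_hi g1 by simp

lemma Psi_nonneg: "0 \<le> t \<Longrightarrow> 0 \<le> Psi g t" using Psi_mono[of 0 t] Psi_0 by simp

lemma Psi_le1: "t \<le> 1 \<Longrightarrow> Psi g t \<le> 1" using Psi_mono[of t 1] Psi_1 by simp

lemma K_le_M: "g \<le> L \<Longrightarrow> Kc g \<le> (1 + Kc g) * exp (L - 1)"
proof -
  assume "g \<le> L"
  have "Kc g \<le> Kc g * g + Kc g" using K_nonneg g0 by simp
  also have "\<dots> = (1 + Kc g) * exp (g - 1)" using K_id by simp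
  also have "\<dots> \<le> (1 + Kc g) * exp (L - 1)"
    using \<open>g \<le> L\<close> K_nonneg by (intro mult_left_mono) auto
  finally show ?thesis .
qed

lemma agent_usw:
  assumes "0 \<le> x" "0 \<le> d1" "0 \<le> d2" "0 < d1 \<Longrightarrow> x + d1 \<le> g"
    "0 < d2 \<Longrightarrow> g \<le> x + d1 \<and> x + d1 + d2 \<le> L"
  shows "Psi g (x + d1 + d2) - Psi g x \<le> Kc g * d1 + (1 + Kc g) * exp (L - 1) * d2"
proof -
  have p1: "Psi g (x + d1) - Psi g x = Kc g * d1"
  proof (cases "0 < d1")
    case True
    then have "x + d1 \<le> g" "x \<le> g" using assms by auto
    then show ?thesis using Psi_lo by (simp add: algebra_simps)
  next
    case False
    then show ?thesis using assms by simp
  qed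
  have p2: "Psi g (x + d1 + d2) - Psi g (x + d1) \<le> (1 + Kc g) * exp (L - 1) * d2"
  proof (cases "0 < d2")
    case True
    then have a: "g \<le> x + d1" "x + d1 + d2 \<le> L" using assms by auto
    then have "Psi g (x + d1 + d2) - Psi g (x + d1) =
        (1 + Kc g) * (exp (x + d1 + d2 - 1) - exp (x + d1 - 1))"
      using Psi_hi[of "x + d1"] Psi_hi[of "x + d1 + d2"] assms(3) by (simp add: algebra_simps)
    also have "\<dots> \<le> (1 + Kc g) * (d2 * exp (x + d1 + d2 - 1))"
      using exp_diff_le[of "x + d1 - 1" "x + d1 + d2 - 1"] assms(3) K_nonneg
      by (intro mult_left_mono) (auto simp: algebra_simps)
    also have "\<dots> \<le> (1 + Kc g) * (d2 * exp (L - 1))"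
      using a assms(3) K_nonneg by (intro mult_left_mono) auto
    finally show ?thesis by (simp add: algebra_simps)
  next
    case False
    then show ?thesis using assms by simp
  qed
  show ?thesis using p1 p2 by simp
qed

end

definition psi :: "real \<Rightarrow> real \<Rightarrow> real" where
  "psi g t = (exp (min t g) - 1) / (exp g - 1)"

context
  fixes g :: real
  assumes gp: "0 < g"
begin

lemma eg_pos: "0 < exp g - 1" using gp by simp

lemma psi_mono: "s \<le> t \<Longrightarrow> psi g s \<le> psi g t"
  unfolding psi_def using eg_pos by (intro divide_right_mono) auto

lemma psi_0: "psi g 0 = 0" unfolding psi_def using gp by simp

lemma psi_nonneg: "0 \<le> t \<Longrightarrow> 0 \<le> psi g t" using psi_mono[of 0 t] psi_0 by simp

lemma psi_top: "g \<le> t \<Longrightarrow> psi g t = 1" unfolding psi_def using eg_pos by simp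

lemma psi_le1: "psi g t \<le> 1"
  unfolding psi_def using eg_pos by (simp add: divide_le_eq_1)

lemma psi_lo: "t \<le> g \<Longrightarrow> psi g t = (exp t - 1) / (exp g - 1)"
  unfolding psi_def by simp

lemma psi_lip: assumes "x \<le> y" shows "psi g y - psi g x \<le> (y - x) * (exp g / (exp g - 1))"
proof -
  have "exp (min y g) - exp (min x g) \<le> (min y g - min x g) * exp (min y g)"
    using assms by (intro exp_diff_le) auto
  also have "\<dots> \<le> (y - x) * exp g"
    using assms by (intro mult_mono) (auto simp: min_def)
  finally have "exp (min y g) - exp (min x g) \<le> (y - x) * exp g" .
  then have "(exp (min y g) - exp (min x g)) / (exp g - 1) \<le> (y - x) * exp g / (exp g - 1)"
    using eg_pos by (intro divide_right_mono) auto
  then show ?thesis unfolding psi_def by (simp add: diff_divide_distrib)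
qed

lemma psi_step: assumes "0 \<le> d" "x + d \<le> L" "L \<le> g"
  shows "psi g (x + d) - psi g x \<le> d * (exp L / (exp g - 1))"
proof -
  have "exp (x + d) - exp x \<le> d * exp (x + d)" using exp_diff_le[of x "x + d"] assms by simp
  also have "\<dots> \<le> d * exp L" using assms by (intro mult_left_mono) auto
  finally have "(exp (x + d) - exp x) / (exp g - 1) \<le> d * exp L / (exp g - 1)"
    using eg_pos by (intro divide_right_mono) auto
  then show ?thesis using assms psi_lo[of x] psi_lo[of "x + d"]
    by (simp add: diff_divide_distrib)
qed

end

lemma usw_item:
  assumes sp: "spec cls g x S d1 d2" and finS: "finite S" and x0: "\<forall>a. 0 \<le> x a"
    and g0: "0 \<le> g" and g1: "g \<le> 1"
  shows "\<exists>\<beta>. 0 \<le> \<beta> \<and> (\<forall>a\<in>S. 1 \<le> Psi g (x a + d1 a + d2 a) + \<beta>) \<and>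
    (\<Sum>a\<in>S. Psi g (x a + d1 a + d2 a) - Psi g (x a)) + \<beta> \<le> (1 + Kc g) * (\<Sum>a\<in>S. d1 a + d2 a)"
proof -
  have nn: "\<forall>a. 0 \<le> d1 a \<and> 0 \<le> d2 a" and p1: "\<forall>a. 0 < d1 a \<longrightarrow> x a + d1 a \<le> g"
    and p2: "\<forall>a. 0 < d2 a \<longrightarrow> g \<le> x a + d1 a"
    and cs: "((\<Sum>a\<in>S. d1 a) = 1 \<and> (\<forall>a. d2 a = 0)) \<or>
    (\<exists>L. g \<le> L \<and> L \<le> 1 \<and> (\<forall>a\<in>S. L \<le> x a + d1 a + d2 a) \<and>
         (\<forall>a. 0 < d2 a \<longrightarrow> x a + d1 a + d2 a \<le> L) \<and>
         ((\<Sum>a\<in>S. d1 a + d2 a) = 1 \<or> L = 1))"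
    using sp unfolding spec_def by blast+
  have K0: "0 \<le> Kc g" using K_nonneg g0 g1 by blast
  from cs show ?thesis
  proof
    assume A: "(\<Sum>a\<in>S. d1 a) = 1 \<and> (\<forall>a. d2 a = 0)"
    have ag: "Psi g (x a + d1 a + d2 a) - Psi g (x a) \<le> Kc g * d1 a" for a
    proof -
      have "Psi g (x a + d1 a + d2 a) - Psi g (x a) \<le> Kc g * d1 a + (1 + Kc g) * exp (1 - 1) * d2 a"
        using nn p1 A x0 by (intro agent_usw[OF g0 g1]) auto
      then show ?thesis using A by simp
    qed
    have "(\<Sum>a\<in>S. Psi g (x a + d1 a + d2 a) - Psi g (x a)) \<le> (\<Sum>a\<in>S. Kc g * d1 a)"
      by (intro sum_mono ag)
    also have "\<dots> = Kc g" using A by (simp add: sum_distrib_left[symmetric])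
    finally have s1: "(\<Sum>a\<in>S. Psi g (x a + d1 a + d2 a) - Psi g (x a)) \<le> Kc g" .
    have s2: "(\<Sum>a\<in>S. d1 a + d2 a) = 1" using A by simp
    show ?thesis
    proof (intro exI[of _ 1] conjI ballI)
      fix a assume "a \<in> S"
      have "0 \<le> x a + d1 a + d2 a" using x0 nn by (simp add: add_nonneg_nonneg)
      then show "1 \<le> Psi g (x a + d1 a + d2 a) + 1" using Psi_nonneg[OF g0 g1] by simp
    qed (use s1 s2 in auto)
  next
    assume "\<exists>L. g \<le> L \<and> L \<le> 1 \<and> (\<forall>a\<in>S. L \<le> x a + d1 a + d2 a) \<and>
         (\<forall>a. 0 < d2 a \<longrightarrow> x a + d1 a + d2 a \<le> L) \<and>
         ((\<Sum>a\<in>S. d1 a + d2 a) = 1 \<or> L = 1)"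
    then obtain L where L: "g \<le> L" "L \<le> 1" "\<forall>a\<in>S. L \<le> x a + d1 a + d2 a"
         "\<forall>a. 0 < d2 a \<longrightarrow> x a + d1 a + d2 a \<le> L" "(\<Sum>a\<in>S. d1 a + d2 a) = 1 \<or> L = 1"
      by blast
    define M where "M = (1 + Kc g) * exp (L - 1)"
    have KM: "Kc g \<le> M" unfolding M_def using K_le_M[OF g0 g1 L(1)] .
    have M1: "M \<le> 1 + Kc g" unfolding M_def using L(2) K0 by (intro mult_left_le) auto
    have PL: "Psi g L = M - Kc g" unfolding M_def using Psi_hi[OF g0 g1 L(1)] by simp
    have ag: "Psi g (x a + d1 a + d2 a) - Psi g (x a) \<le> M * (d1 a + d2 a)" for a
    proof -
      have "Psi g (x a + d1 a + d2 a) - Psi g (x a) \<le> Kc g * d1 a + M * d2 a"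
        unfolding M_def using nn p1 p2 L(4) x0 by (intro agent_usw[OF g0 g1]) auto
      also have "\<dots> \<le> M * d1 a + M * d2 a" using KM nn by (simp add: mult_right_mono)
      finally show ?thesis by (simp add: algebra_simps)
    qed
    define s where "s = (\<Sum>a\<in>S. d1 a + d2 a)"
    have "(\<Sum>a\<in>S. Psi g (x a + d1 a + d2 a) - Psi g (x a)) \<le> (\<Sum>a\<in>S. M * (d1 a + d2 a))"
      by (intro sum_mono ag)
    also have "\<dots> = M * s" unfolding s_def by (simp add: sum_distrib_left)
    finally have s1: "(\<Sum>a\<in>S. Psi g (x a + d1 a + d2 a) - Psi g (x a)) \<le> M * s" .
    have key: "M * s + (1 - Psi g L) \<le> (1 + Kc g) * s"
    proof -
      have "M * s + (1 - Psi g L) - (1 + Kc g) * s = (M - (1 + Kc g)) * (s - 1)"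
        using PL by (simp add: algebra_simps)
      also have "\<dots> = 0" using L(5) unfolding s_def M_def by auto
      finally show ?thesis by simp
    qed
    show ?thesis
    proof (intro exI[of _ "1 - Psi g L"] conjI ballI)
      show "0 \<le> 1 - Psi g L" using Psi_le1[OF g0 g1 L(2)] by simp
      fix a assume "a \<in> S"
      then have "Psi g L \<le> Psi g (x a + d1 a + d2 a)" using L(3) Psi_mono[OF g0 g1] by blast
      then show "1 \<le> Psi g (x a + d1 a + d2 a) + (1 - Psi g L)" by simp
    next
      show "(\<Sum>a\<in>S. Psi g (x a + d1 a + d2 a) - Psi g (x a)) + (1 - Psi g L) \<le> (1 + Kc g) * (\<Sum>a\<in>S. d1 a + d2 a)"
        using s1 key unfolding s_def by linarith
    qed
  qed
qed

lemma cef_item: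
  assumes sp: "spec cls g x S d1 d2" and fin: "finite (cls ! i)" and i: "i < length cls" and j: "j < length cls"
    and x0: "\<forall>a. 0 \<le> x a" and gp: "0 < g" and g1: "g \<le> 1"
  shows "\<exists>\<beta>. 0 \<le> \<beta> \<and> (\<forall>a\<in>S \<inter> cls ! i. 1 \<le> psi g (x a + d1 a + d2 a) + \<beta>) \<and>
    (\<Sum>a\<in>cls ! i. psi g (x a + d1 a + d2 a) - psi g (x a)) + (\<Sum>a\<in>cls ! j. d1 a + d2 a) * \<beta>
      \<le> (exp g / (exp g - 1)) * (\<Sum>a\<in>cls ! i. d1 a + d2 a)"
proof -
  have nn: "\<forall>a. 0 \<le> d1 a \<and> 0 \<le> d2 a" and out: "\<forall>a. a \<notin> S \<longrightarrow> d1 a = 0 \<and> d2 a = 0"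
    and p2: "\<forall>a. 0 < d2 a \<longrightarrow> g \<le> x a + d1 a"
    and cl: "\<forall>i<length cls. \<exists>Li. 0 \<le> Li \<and> Li \<le> g \<and> (\<forall>a\<in>S \<inter> cls ! i. Li \<le> x a + d1 a) \<and>
       (\<forall>a\<in>cls ! i. 0 < d1 a \<longrightarrow> x a + d1 a \<le> Li) \<and>
       ((\<exists>a\<in>S \<inter> cls ! i. x a + d1 a + d2 a < g) \<longrightarrow>
          (\<forall>j<length cls. (\<Sum>a\<in>cls ! j. d1 a + d2 a) \<le> (\<Sum>a\<in>cls ! i. d1 a)))"
    using sp unfolding spec_def by blast+
  obtain Li where Li0: "0 \<le> Li" and Lig: "Li \<le> g" and Lilo: "\<forall>a\<in>S \<inter> cls ! i. Li \<le> x a + d1 a"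
    and Lihi: "\<forall>a\<in>cls ! i. 0 < d1 a \<longrightarrow> x a + d1 a \<le> Li"
    and fair: "(\<exists>a\<in>S \<inter> cls ! i. x a + d1 a + d2 a < g) \<Longrightarrow>
          (\<forall>j<length cls. (\<Sum>a\<in>cls ! j. d1 a + d2 a) \<le> (\<Sum>a\<in>cls ! i. d1 a))"
    using cl i by blast
  define R where "R = exp g / (exp g - 1)"
  have egp: "0 < exp g - 1" using gp by simp
  have R0: "0 \<le> R" unfolding R_def using egp by simp
  have yj0: "0 \<le> (\<Sum>a\<in>cls ! j. d1 a + d2 a)" using nn by (simp add: sum_nonneg add_nonneg_nonneg)
  show ?thesis
  proof (cases "\<exists>a\<in>S \<inter> cls ! i. x a + d1 a + d2 a < g")
    case True
    define E where "E = exp Li / (exp g - 1)"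
    have ag: "psi g (x a + d1 a + d2 a) - psi g (x a) \<le> d1 a * E" if "a \<in> cls ! i" for a
    proof (cases "0 < d1 a")
      case True
      have le: "x a + d1 a \<le> Li" using Lihi that True by blast
      have eq: "psi g (x a + d1 a + d2 a) = psi g (x a + d1 a)"
      proof (cases "0 < d2 a")
        case True
        then have "g \<le> x a + d1 a" using p2 by blast
        then show ?thesis using psi_top[OF gp] nn by (simp add: add_increasing2)
      next
        case False
        have "0 \<le> d2 a" using nn by blast
        then have "d2 a = 0" using False by linarith
        then show ?thesis by simp
      qed
      show ?thesis unfolding eq E_def using psi_step[OF gp _ le Lig] nn by simp
    next
      case False
      have "0 \<le> d1 a" using nn by blast
      then have d10: "d1 a = 0" using False by linarith
      show ?thesis
      proof (cases "0 < d2 a")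
        case True
        then have "g \<le> x a" using p2 d10 by force
        then show ?thesis using psi_top[OF gp] nn d10 by (simp add: add_increasing2)
      next
        case False
        have "0 \<le> d2 a" using nn by blast
        then have "d2 a = 0" using False by linarith
        then show ?thesis using d10 by simp
      qed
    qed
    have s1: "(\<Sum>a\<in>cls ! i. psi g (x a + d1 a + d2 a) - psi g (x a)) \<le> (\<Sum>a\<in>cls ! i. d1 a) * E"
    proof -
      have "(\<Sum>a\<in>cls ! i. psi g (x a + d1 a + d2 a) - psi g (x a)) \<le> (\<Sum>a\<in>cls ! i. d1 a * E)"
        by (intro sum_mono ag)
      then show ?thesis by (simp add: sum_distrib_right)
    qed
    define \<beta> where "\<beta> = 1 - psi g Li"
    have b0: "0 \<le> \<beta>" unfolding \<beta>_def using psi_le1[OF gp] by simp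
    have s2: "(\<Sum>a\<in>cls ! j. d1 a + d2 a) * \<beta> \<le> (\<Sum>a\<in>cls ! i. d1 a) * \<beta>"
      using fair[OF \<open>\<exists>a\<in>S \<inter> cls ! i. x a + d1 a + d2 a < g\<close>] b0 j
        by (simp add: mult_right_mono)
    have EB: "E + \<beta> = R" unfolding E_def \<beta>_def R_def using psi_lo[OF gp Lig] egp
      by (simp add: field_simps)
    have d1le: "(\<Sum>a\<in>cls ! i. d1 a) \<le> (\<Sum>a\<in>cls ! i. d1 a + d2 a)"
      using nn by (intro sum_mono) simp
    have "(\<Sum>a\<in>cls ! i. psi g (x a + d1 a + d2 a) - psi g (x a)) + (\<Sum>a\<in>cls ! j. d1 a + d2 a) * \<beta>
        \<le> (\<Sum>a\<in>cls ! i. d1 a) * (E + \<beta>)" using s1 s2 by (simp add: algebra_simps)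
    also have "\<dots> \<le> R * (\<Sum>a\<in>cls ! i. d1 a + d2 a)" using EB d1le R0 by (simp add: mult.commute mult_left_mono)
    finally have tot: "(\<Sum>a\<in>cls ! i. psi g (x a + d1 a + d2 a) - psi g (x a)) + (\<Sum>a\<in>cls ! j. d1 a + d2 a) * \<beta>
        \<le> R * (\<Sum>a\<in>cls ! i. d1 a + d2 a)" .
    show ?thesis
    proof (intro exI[of _ \<beta>] conjI ballI)
      show "0 \<le> \<beta>" by (rule b0)
      fix a assume a: "a \<in> S \<inter> cls ! i"
      have "Li \<le> x a + d1 a + d2 a" using Lilo a nn by (meson add_increasing2 order_trans)
      then have "psi g Li \<le> psi g (x a + d1 a + d2 a)" by (rule psi_mono[OF gp])
      then show "1 \<le> psi g (x a + d1 a + d2 a) + \<beta>" unfolding \<beta>_def by simp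
    next
      show "(\<Sum>a\<in>cls ! i. psi g (x a + d1 a + d2 a) - psi g (x a)) + (\<Sum>a\<in>cls ! j. d1 a + d2 a) * \<beta>
        \<le> exp g / (exp g - 1) * (\<Sum>a\<in>cls ! i. d1 a + d2 a)" using tot unfolding R_def .
    qed
  next
    case False
    have ag: "psi g (x a + d1 a + d2 a) - psi g (x a) \<le> (d1 a + d2 a) * R" for a
      using psi_lip[OF gp, of "x a" "x a + d1 a + d2 a"] nn unfolding R_def by simp
    have "(\<Sum>a\<in>cls ! i. psi g (x a + d1 a + d2 a) - psi g (x a)) \<le> (\<Sum>a\<in>cls ! i. (d1 a + d2 a) * R)"
      by (intro sum_mono ag)
    also have "\<dots> = R * (\<Sum>a\<in>cls ! i. d1 a + d2 a)" by (simp add: sum_distrib_left mult.commute)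
    finally have tot: "(\<Sum>a\<in>cls ! i. psi g (x a + d1 a + d2 a) - psi g (x a)) \<le> R * (\<Sum>a\<in>cls ! i. d1 a + d2 a)" .
    show ?thesis
    proof (intro exI[of _ 0] conjI ballI)
      fix a assume a: "a \<in> S \<inter> cls ! i"
      then have "g \<le> x a + d1 a + d2 a" using False by force
      then show "1 \<le> psi g (x a + d1 a + d2 a) + 0" using psi_top[OF gp] by simp
    qed (use tot in \<open>auto simp: R_def\<close>)
  qed
qed

lemma dual_bound:
  fixes z X :: "nat \<Rightarrow> 'a \<Rightarrow> real" and \<Phi> :: "real \<Rightarrow> real"
  assumes finA: "finite A" and z0: "\<forall>q a. 0 \<le> z q a"
    and feas: "\<forall>q<n. \<forall>a\<in>A. z q a \<noteq> 0 \<longrightarrow> 1 \<le> \<Phi> (X (Suc q) a) + \<beta> q"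
    and b0: "\<forall>q<n. 0 \<le> \<beta> q" and ca: "\<forall>a\<in>A. (\<Sum>q<n. z q a) \<le> 1"
    and ci: "\<forall>q<n. (\<Sum>a\<in>A. z q a) \<le> w q"
    and P0: "\<forall>a\<in>A. 0 \<le> \<Phi> (X n a)"
    and Pm: "\<forall>q<n. \<forall>a\<in>A. \<Phi> (X (Suc q) a) \<le> \<Phi> (X n a)"
  shows "(\<Sum>q<n. \<Sum>a\<in>A. z q a) \<le> (\<Sum>a\<in>A. \<Phi> (X n a)) + (\<Sum>q<n. \<beta> q * w q)"
proof -
  have "(\<Sum>q<n. \<Sum>a\<in>A. z q a) \<le> (\<Sum>q<n. \<Sum>a\<in>A. z q a * \<Phi> (X n a) + z q a * \<beta> q)"
  proof (intro sum_mono)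
    fix q a assume q: "q \<in> {..<n}" and a: "a \<in> A"
    show "z q a \<le> z q a * \<Phi> (X n a) + z q a * \<beta> q"
    proof (cases "z q a = 0")
      case True then show ?thesis by simp
    next
      case False
      then have "1 \<le> \<Phi> (X n a) + \<beta> q" using feas Pm q a by fastforce
      then have "z q a * 1 \<le> z q a * (\<Phi> (X n a) + \<beta> q)"
        using z0 by (intro mult_left_mono) auto
      then show ?thesis by (simp add: algebra_simps)
    qed
  qed
  also have "\<dots> = (\<Sum>q<n. \<Sum>a\<in>A. z q a * \<Phi> (X n a)) + (\<Sum>q<n. \<Sum>a\<in>A. z q a * \<beta> q)"
    by (simp add: sum.distrib)
  also have "(\<Sum>q<n. \<Sum>a\<in>A. z q a * \<Phi> (X n a)) = (\<Sum>a\<in>A. \<Phi> (X n a) * (\<Sum>q<n. z q a))"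
    by (subst sum.swap) (simp add: sum_distrib_left mult.commute)
  also have "(\<Sum>q<n. \<Sum>a\<in>A. z q a * \<beta> q) = (\<Sum>q<n. \<beta> q * (\<Sum>a\<in>A. z q a))"
    by (simp add: sum_distrib_left mult.commute)
  also have "(\<Sum>a\<in>A. \<Phi> (X n a) * (\<Sum>q<n. z q a)) \<le> (\<Sum>a\<in>A. \<Phi> (X n a))"
  proof (intro sum_mono)
    fix a assume "a \<in> A"
    then show "\<Phi> (X n a) * (\<Sum>q<n. z q a) \<le> \<Phi> (X n a)"
      using P0 ca mult_left_le by blast
  qed
  also have "(\<Sum>q<n. \<beta> q * (\<Sum>a\<in>A. z q a)) \<le> (\<Sum>q<n. \<beta> q * w q)"
    using b0 ci by (intro sum_mono mult_left_mono) auto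
  finally show ?thesis by simp
qed

lemma telescope:
  fixes X :: "nat \<Rightarrow> 'a \<Rightarrow> real" and \<Phi> :: "real \<Rightarrow> real"
  shows "(\<Sum>a\<in>A. \<Phi> (X n a)) = (\<Sum>a\<in>A. \<Phi> (X 0 a)) + (\<Sum>q<n. \<Sum>a\<in>A. \<Phi> (X (Suc q) a) - \<Phi> (X q a))"
proof (induction n)
  case 0 then show ?case by simp
next
  case (Suc n)
  have "(\<Sum>a\<in>A. \<Phi> (X (Suc n) a) - \<Phi> (X n a)) = (\<Sum>a\<in>A. \<Phi> (X (Suc n) a)) - (\<Sum>a\<in>A. \<Phi> (X n a))"
    by (rule sum_subtractf)
  then show ?case using Suc.IH by simp
qed

definition stp :: "'a set list \<Rightarrow> real \<Rightarrow> ('a \<Rightarrow> real) \<Rightarrow> 'a set \<Rightarrow> ('a \<Rightarrow> real) \<times> ('a \<Rightarrow> real)" where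
  "stp cls g x S = (SOME p. spec cls g x S (fst p) (snd p))"

primrec lev :: "'a set list \<Rightarrow> real \<Rightarrow> 'a set list \<Rightarrow> nat \<Rightarrow> 'a \<Rightarrow> real" where
  "lev cls g seq 0 = (\<lambda>a. 0)"
| "lev cls g seq (Suc n) = (\<lambda>a. lev cls g seq n a + fst (stp cls g (lev cls g seq n) (seq ! n)) a
      + snd (stp cls g (lev cls g seq n) (seq ! n)) a)"

definition D1 where "D1 cls g seq q = fst (stp cls g (lev cls g seq q) (seq ! q))"
definition D2 where "D2 cls g seq q = snd (stp cls g (lev cls g seq q) (seq ! q))"
definition dd where "dd cls g seq q a = D1 cls g seq q a + D2 cls g seq q a"

lemma lev_Suc: "lev cls g seq (Suc q) a = lev cls g seq q a + D1 cls g seq q a + D2 cls g seq q a"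
  unfolding D1_def D2_def by simp

declare lev.simps(2)[simp del]

lemma lev_Suc': "lev cls g seq (Suc q) a = lev cls g seq q a + dd cls g seq q a"
  unfolding dd_def lev_Suc by simp

definition algo :: "real \<Rightarrow> 'a online_alg" where
  "algo g cls pre = dd cls g pre (length pre - 1)"

lemma lev_take: "q \<le> m \<Longrightarrow> lev cls g (take m seq) q = lev cls g seq q"
proof (induction q)
  case 0 then show ?case by simp
next
  case (Suc q)
  then have "lev cls g (take m seq) q = lev cls g seq q" by simp
  moreover have "take m seq ! q = seq ! q" using Suc.prems by simp
  ultimately show ?case by (simp add: lev.simps(2))
qed

lemma run_algo: "run (algo g) cls seq q a = (if q < length seq then dd cls g seq q a else 0)"
proof (cases "q < length seq")
  case True
  have l: "length (take (Suc q) seq) - 1 = q" using True by simp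
  have t: "take (Suc q) seq ! q = seq ! q" by simp
  have lv: "lev cls g (take (Suc q) seq) q = lev cls g seq q" by (rule lev_take) simp
  show ?thesis using True unfolding run_def algo_def l dd_def D1_def D2_def t lv by simp
next
  case False
  then show ?thesis unfolding run_def by simp
qed

context
  fixes cls seq :: "'a set list" and g :: real
  assumes inst: "is_instance cls seq" and g0: "0 \<le> g" and g1: "g \<le> 1"
begin

lemma fin: "\<forall>i<length cls. finite (cls ! i)" using inst unfolding is_instance_def by blast
lemma disj: "\<forall>i<length cls. \<forall>j<length cls. i \<noteq> j \<longrightarrow> cls ! i \<inter> cls ! j = {}"
  using inst unfolding is_instance_def by blast
lemma SA: "q < length seq \<Longrightarrow> seq ! q \<subseteq> agents cls" using inst unfolding is_instance_def by blast
lemma finA: "finite (agents cls)" using finite_agents[OF fin] .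
lemma finS: "q < length seq \<Longrightarrow> finite (seq ! q)" using finA SA finite_subset by blast

lemma lev_bounds_spec:
  "q \<le> length seq \<Longrightarrow> (\<forall>a. 0 \<le> lev cls g seq q a \<and> lev cls g seq q a \<le> 1) \<and>
     (\<forall>q'<q. spec cls g (lev cls g seq q') (seq ! q') (D1 cls g seq q') (D2 cls g seq q'))"
proof (induction q)
  case 0 then show ?case by simp
next
  case (Suc q)
  then have IH: "\<forall>a. 0 \<le> lev cls g seq q a \<and> lev cls g seq q a \<le> 1"
    "\<forall>q'<q. spec cls g (lev cls g seq q') (seq ! q') (D1 cls g seq q') (D2 cls g seq q')" by auto
  have q: "q < length seq" using Suc.prems by simp
  have "\<exists>d1 d2. spec cls g (lev cls g seq q) (seq ! q) d1 d2"
    by (rule spec_exists[OF fin disj SA[OF q] IH(1) g0 g1])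
  then have "\<exists>p. spec cls g (lev cls g seq q) (seq ! q) (fst p) (snd p)" by auto
  then have sp: "spec cls g (lev cls g seq q) (seq ! q) (D1 cls g seq q) (D2 cls g seq q)"
    unfolding D1_def D2_def stp_def by (rule someI_ex)
  have b: "0 \<le> lev cls g seq (Suc q) a \<and> lev cls g seq (Suc q) a \<le> 1" for a
  proof -
    have nn: "0 \<le> D1 cls g seq q a" "0 \<le> D2 cls g seq q a" using sp unfolding spec_def by auto
    have le: "lev cls g seq q a + D1 cls g seq q a + D2 cls g seq q a \<le> 1"
    proof (cases "a \<in> seq ! q")
      case True then show ?thesis using sp unfolding spec_def by blast
    next
      case False
      then have "D1 cls g seq q a = 0" "D2 cls g seq q a = 0" using sp unfolding spec_def by auto
      then show ?thesis using IH(1) by simp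
    qed
    show ?thesis unfolding lev_Suc using nn le IH(1) by (metis add_nonneg_nonneg)
  qed
  show ?case using b IH(2) sp less_Suc_eq by auto
qed

lemma lev01: "q \<le> length seq \<Longrightarrow> 0 \<le> lev cls g seq q a \<and> lev cls g seq q a \<le> 1"
  using lev_bounds_spec by blast

lemma spec_q: "q < length seq \<Longrightarrow> spec cls g (lev cls g seq q) (seq ! q) (D1 cls g seq q) (D2 cls g seq q)"
  using lev_bounds_spec[of "length seq"] by blast

lemma dd_nn: "q < length seq \<Longrightarrow> 0 \<le> dd cls g seq q a"
  using spec_q unfolding spec_def dd_def by (simp add: add_nonneg_nonneg)

lemma dd_out: "q < length seq \<Longrightarrow> a \<notin> seq ! q \<Longrightarrow> dd cls g seq q a = 0"
  using spec_q unfolding spec_def dd_def by simp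

lemma lev_sum: "lev cls g seq q a = (\<Sum>q'<q. dd cls g seq q' a)"
  by (induction q) (simp_all add: lev_Suc')

lemma lev_mono: "q \<le> m \<Longrightarrow> m \<le> length seq \<Longrightarrow> lev cls g seq q a \<le> lev cls g seq m a"
proof (induction m)
  case 0 then show ?case by simp
next
  case (Suc m)
  show ?case
  proof (cases "q = Suc m")
    case True then show ?thesis by simp
  next
    case False
    then have "lev cls g seq q a \<le> lev cls g seq m a" using Suc by simp
    also have "\<dots> \<le> lev cls g seq (Suc m) a" unfolding lev_Suc' using dd_nn[of m a] Suc.prems by simp
    finally show ?thesis .
  qed
qed

lemma sum_S_agents:
  fixes f :: "'a \<Rightarrow> real"
  assumes "q < length seq" "\<forall>a. a \<notin> seq ! q \<longrightarrow> f a = 0"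
  shows "(\<Sum>a\<in>agents cls. f a) = (\<Sum>a\<in>seq ! q. f a)"
  by (rule sum.mono_neutral_right) (use assms finA SA in auto)

lemma valid: "frac_matching cls seq (run (algo g) cls seq)"
proof -
  have f1: "\<forall>q a. 0 \<le> run (algo g) cls seq q a \<and> run (algo g) cls seq q a \<le> 1"
  proof (intro allI)
    fix q a
    show "0 \<le> run (algo g) cls seq q a \<and> run (algo g) cls seq q a \<le> 1"
    proof (cases "q < length seq")
      case True
      have "lev cls g seq (Suc q) a \<le> 1" "0 \<le> lev cls g seq q a" using lev01 True by auto
      then show ?thesis unfolding run_algo lev_Suc' using True dd_nn by simp
    qed (simp add: run_algo)
  qed
  have f2: "\<forall>q a. run (algo g) cls seq q a \<noteq> 0 \<longrightarrow> q < length seq \<and> a \<in> seq ! q"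
    unfolding run_algo using dd_out by (auto split: if_splits)
  have f3: "\<forall>q. (\<Sum>a\<in>agents cls. run (algo g) cls seq q a) \<le> 1"
  proof
    fix q
    show "(\<Sum>a\<in>agents cls. run (algo g) cls seq q a) \<le> 1"
    proof (cases "q < length seq")
      case True
      have "(\<Sum>a\<in>agents cls. run (algo g) cls seq q a) = (\<Sum>a\<in>seq ! q. dd cls g seq q a)"
        unfolding run_algo using True sum_S_agents[OF True, of "dd cls g seq q"] dd_out by simp
      also have "\<dots> \<le> 1" using spec_q[OF True] unfolding spec_def dd_def by blast
      finally show ?thesis .
    qed (simp add: run_algo)
  qed
  have f4: "\<forall>a. (\<Sum>q<length seq. run (algo g) cls seq q a) \<le> 1"
  proof
    fix a
    have "(\<Sum>q<length seq. run (algo g) cls seq q a) = lev cls g seq (length seq) a"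
      unfolding lev_sum run_algo by simp
    then show "(\<Sum>q<length seq. run (algo g) cls seq q a) \<le> 1" using lev01 by simp
  qed
  show ?thesis unfolding frac_matching_def using f1 f2 f3 f4 by blast
qed

end

context
  fixes cls seq :: "'a set list" and g :: real
  assumes inst: "is_instance cls seq" and g0: "0 \<le> g" and g1: "g \<le> 1"
begin

lemmas fin' = fin[OF inst g0 g1]
lemmas disj' = disj[OF inst g0 g1]
lemmas SA' = SA[OF inst g0 g1]
lemmas finA' = finA[OF inst g0 g1]
lemmas finS' = finS[OF inst g0 g1]
lemmas lev01' = lev01[OF inst g0 g1]
lemmas spec_q' = spec_q[OF inst g0 g1]
lemmas dd_nn' = dd_nn[OF inst g0 g1]
lemmas dd_out' = dd_out[OF inst g0 g1]
lemmas lev_mono' = lev_mono[OF inst g0 g1]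
lemmas sum_S_agents' = sum_S_agents[OF inst g0 g1]

lemma usw_eq: "usw cls seq X = (\<Sum>q<length seq. \<Sum>a\<in>agents cls. X q a)"
proof -
  have "usw cls seq X = (\<Sum>i<length cls. \<Sum>a\<in>agents cls \<inter> cls ! i. \<Sum>q<length seq. X q a)"
    unfolding usw_def class_value_def agent_value_def
  proof (rule sum.cong[OF refl])
    fix i assume "i \<in> {..<length cls}"
    then have "agents cls \<inter> cls ! i = cls ! i" using agents_eq[of cls] by auto
    then show "(\<Sum>a\<in>cls ! i. \<Sum>q<length seq. X q a) = (\<Sum>a\<in>agents cls \<inter> cls ! i. \<Sum>q<length seq. X q a)"
      by simp
  qed
  also have "\<dots> = (\<Sum>a\<in>agents cls. \<Sum>q<length seq. X q a)"
    by (rule sum_over_classes[OF fin' disj' order_refl, symmetric])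
  also have "\<dots> = (\<Sum>q<length seq. \<Sum>a\<in>agents cls. X q a)" by (rule sum.swap)
  finally show ?thesis .
qed

lemma usw_bound:
  assumes fm: "frac_matching cls seq Xs"
  shows "(1 - exp (g - 1) / (g + 1)) * usw cls seq Xs \<le> usw cls seq (run (algo g) cls seq)"
proof -
  define n where "n = length seq"
  define A where "A = agents cls"
  define L where "L = lev cls g seq"
  define K where "K = Kc g"
  have "\<forall>q\<in>{..<n}. \<exists>\<beta>. 0 \<le> \<beta> \<and> (\<forall>a\<in>seq ! q. 1 \<le> Psi g (L (Suc q) a) + \<beta>) \<and>
      (\<Sum>a\<in>A. Psi g (L (Suc q) a) - Psi g (L q a)) + \<beta> \<le> (1 + K) * (\<Sum>a\<in>A. dd cls g seq q a)"
  proof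
    fix q assume "q \<in> {..<n}"
    then have q: "q < length seq" unfolding n_def by simp
    obtain \<beta> where b: "0 \<le> \<beta>"
      "\<forall>a\<in>seq ! q. 1 \<le> Psi g (L q a + D1 cls g seq q a + D2 cls g seq q a) + \<beta>"
      "(\<Sum>a\<in>seq ! q. Psi g (L q a + D1 cls g seq q a + D2 cls g seq q a) - Psi g (L q a)) + \<beta>
        \<le> (1 + K) * (\<Sum>a\<in>seq ! q. D1 cls g seq q a + D2 cls g seq q a)"
      using usw_item[OF spec_q'[OF q] finS'[OF q] _ g0 g1] lev01'[of q] q
      unfolding L_def K_def by fastforce
    have out: "a \<notin> seq ! q \<Longrightarrow> D1 cls g seq q a = 0 \<and> D2 cls g seq q a = 0" for a
      using spec_q'[OF q] unfolding spec_def by blast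
    have e1: "(\<Sum>a\<in>A. Psi g (L (Suc q) a) - Psi g (L q a)) =
        (\<Sum>a\<in>seq ! q. Psi g (L q a + D1 cls g seq q a + D2 cls g seq q a) - Psi g (L q a))"
      unfolding A_def L_def lev_Suc using sum_S_agents'[OF q] out by simp
    have e2: "(\<Sum>a\<in>A. dd cls g seq q a) = (\<Sum>a\<in>seq ! q. D1 cls g seq q a + D2 cls g seq q a)"
      unfolding A_def dd_def using sum_S_agents'[OF q] out by simp
    show "\<exists>\<beta>. 0 \<le> \<beta> \<and> (\<forall>a\<in>seq ! q. 1 \<le> Psi g (L (Suc q) a) + \<beta>) \<and>
      (\<Sum>a\<in>A. Psi g (L (Suc q) a) - Psi g (L q a)) + \<beta> \<le> (1 + K) * (\<Sum>a\<in>A. dd cls g seq q a)"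
      using b e1 e2 unfolding L_def lev_Suc by auto
  qed
  from bchoice[OF this] obtain bf where bf: "\<forall>q\<in>{..<n}. 0 \<le> bf q \<and> (\<forall>a\<in>seq ! q. 1 \<le> Psi g (L (Suc q) a) + bf q) \<and>
      (\<Sum>a\<in>A. Psi g (L (Suc q) a) - Psi g (L q a)) + bf q \<le> (1 + K) * (\<Sum>a\<in>A. dd cls g seq q a)"
    by blast
  have fmX: "\<forall>q a. 0 \<le> Xs q a" "\<forall>q a. Xs q a \<noteq> 0 \<longrightarrow> q < length seq \<and> a \<in> seq ! q"
    "\<forall>q. (\<Sum>a\<in>agents cls. Xs q a) \<le> 1" "\<forall>a. (\<Sum>q<length seq. Xs q a) \<le> 1"
    using fm unfolding frac_matching_def by auto
  have db: "(\<Sum>q<n. \<Sum>a\<in>A. Xs q a) \<le> (\<Sum>a\<in>A. Psi g (L n a)) + (\<Sum>q<n. bf q * 1)"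
  proof (rule dual_bound)
    show "finite A" unfolding A_def by (rule finA')
    show "\<forall>q a. 0 \<le> Xs q a" by (rule fmX(1))
    show "\<forall>q<n. \<forall>a\<in>A. Xs q a \<noteq> 0 \<longrightarrow> 1 \<le> Psi g (L (Suc q) a) + bf q"
      using fmX(2) bf by auto
    show "\<forall>q<n. 0 \<le> bf q" using bf by auto
    show "\<forall>a\<in>A. (\<Sum>q<n. Xs q a) \<le> 1" using fmX(4) unfolding n_def by auto
    show "\<forall>q<n. (\<Sum>a\<in>A. Xs q a) \<le> 1" using fmX(3) unfolding A_def by auto
    show "\<forall>a\<in>A. 0 \<le> Psi g (L n a)" using lev01'[of n] Psi_nonneg[OF g0 g1] unfolding L_def n_def by auto
    show "\<forall>q<n. \<forall>a\<in>A. Psi g (L (Suc q) a) \<le> Psi g (L n a)"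
      using lev_mono' Psi_mono[OF g0 g1] unfolding L_def n_def by (meson Suc_leI order_refl)
  qed
  have tel: "(\<Sum>a\<in>A. Psi g (L n a)) = (\<Sum>q<n. \<Sum>a\<in>A. Psi g (L (Suc q) a) - Psi g (L q a))"
    using telescope[where \<Phi>="Psi g" and X=L and A=A and n=n] Psi_0[OF g0 g1] unfolding L_def by (simp add: lev.simps(1))
  have "usw cls seq Xs = (\<Sum>q<n. \<Sum>a\<in>A. Xs q a)" unfolding usw_eq n_def A_def ..
  also have "\<dots> \<le> (\<Sum>q<n. (\<Sum>a\<in>A. Psi g (L (Suc q) a) - Psi g (L q a)) + bf q)"
    using db tel by (simp add: sum.distrib)
  also have "\<dots> \<le> (\<Sum>q<n. (1 + K) * (\<Sum>a\<in>A. dd cls g seq q a))"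
    using bf by (intro sum_mono) auto
  also have "\<dots> = (1 + K) * usw cls seq (run (algo g) cls seq)"
    unfolding usw_eq n_def A_def sum_distrib_left[symmetric] run_algo by simp
  finally have main: "usw cls seq Xs \<le> (1 + K) * usw cls seq (run (algo g) cls seq)" .
  have Kp: "0 < 1 + K" using K_nonneg[OF g0 g1] unfolding K_def by simp
  have "(1 - exp (g - 1) / (g + 1)) * usw cls seq Xs = usw cls seq Xs / (1 + K)"
    using ratio_eq[OF g0 g1] unfolding K_def by simp
  also have "\<dots> \<le> usw cls seq (run (algo g) cls seq)" using main Kp by (simp add: divide_le_eq mult.commute)
  finally show ?thesis .
qed

end

context
  fixes cls seq :: "'a set list" and g :: real
  assumes inst: "is_instance cls seq" and gp: "0 < g" and g1: "g \<le> 1"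
begin

lemma g0: "0 \<le> g" using gp by simp

lemmas fin'' = fin[OF inst g0 g1]
lemmas finS'' = finS[OF inst g0 g1]
lemmas lev01'' = lev01[OF inst g0 g1]
lemmas spec_q'' = spec_q[OF inst g0 g1]
lemmas dd_nn'' = dd_nn[OF inst g0 g1]
lemmas lev_mono'' = lev_mono[OF inst g0 g1]

lemma cef_bound:
  assumes i: "i < length cls" and j: "j < length cls"
  shows "(1 - exp (- g)) * opt_val cls seq i (class_alloc cls (run (algo g) cls seq) j)
          \<le> class_value cls seq (run (algo g) cls seq) i"
proof -
  define n where "n = length seq"
  define A where "A = cls ! i"
  define L where "L = lev cls g seq"
  define R where "R = exp g / (exp g - 1)"
  define y where "y = class_alloc cls (run (algo g) cls seq) j"
  have finA: "finite A" unfolding A_def using fin'' i by blast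
  have yq: "y q = (\<Sum>a\<in>cls ! j. D1 cls g seq q a + D2 cls g seq q a)" if "q < n" for q
    using that unfolding y_def class_alloc_def run_algo n_def dd_def by simp
  have y0: "0 \<le> y q" for q
    unfolding y_def class_alloc_def run_algo using dd_nn'' by (auto intro: sum_nonneg)
  have "\<forall>q\<in>{..<n}. \<exists>\<beta>. 0 \<le> \<beta> \<and> (\<forall>a\<in>seq ! q \<inter> A. 1 \<le> psi g (L (Suc q) a) + \<beta>) \<and>
      (\<Sum>a\<in>A. psi g (L (Suc q) a) - psi g (L q a)) + y q * \<beta> \<le> R * (\<Sum>a\<in>A. dd cls g seq q a)"
  proof
    fix q assume "q \<in> {..<n}"
    then have q: "q < length seq" "q < n" unfolding n_def by auto
    obtain \<beta> where b: "0 \<le> \<beta>"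
      "\<forall>a\<in>seq ! q \<inter> cls ! i. 1 \<le> psi g (L q a + D1 cls g seq q a + D2 cls g seq q a) + \<beta>"
      "(\<Sum>a\<in>cls ! i. psi g (L q a + D1 cls g seq q a + D2 cls g seq q a) - psi g (L q a))
         + (\<Sum>a\<in>cls ! j. D1 cls g seq q a + D2 cls g seq q a) * \<beta>
        \<le> R * (\<Sum>a\<in>cls ! i. D1 cls g seq q a + D2 cls g seq q a)"
      using cef_item[OF spec_q''[OF q(1)] _ i j _ gp g1] fin'' i lev01''[of q] q
      unfolding L_def R_def by fastforce
    show "\<exists>\<beta>. 0 \<le> \<beta> \<and> (\<forall>a\<in>seq ! q \<inter> A. 1 \<le> psi g (L (Suc q) a) + \<beta>) \<and>
      (\<Sum>a\<in>A. psi g (L (Suc q) a) - psi g (L q a)) + y q * \<beta> \<le> R * (\<Sum>a\<in>A. dd cls g seq q a)"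
      using b yq[OF q(2)] unfolding L_def lev_Suc A_def dd_def by (auto simp: mult.commute)
  qed
  from bchoice[OF this] obtain bf where bf: "\<forall>q\<in>{..<n}. 0 \<le> bf q \<and> (\<forall>a\<in>seq ! q \<inter> A. 1 \<le> psi g (L (Suc q) a) + bf q) \<and>
      (\<Sum>a\<in>A. psi g (L (Suc q) a) - psi g (L q a)) + y q * bf q \<le> R * (\<Sum>a\<in>A. dd cls g seq q a)"
    by blast
  define V where "V = class_value cls seq (run (algo g) cls seq) i"
  have V_eq: "V = (\<Sum>q<n. \<Sum>a\<in>A. dd cls g seq q a)"
    unfolding V_def class_value_def agent_value_def A_def n_def run_algo
    by (simp add: sum.swap[of _ "cls ! i"])
  have tel: "(\<Sum>a\<in>A. psi g (L n a)) = (\<Sum>q<n. \<Sum>a\<in>A. psi g (L (Suc q) a) - psi g (L q a))"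
    using telescope[where \<Phi>="psi g" and X=L and A=A and n=n] psi_0[OF gp] unfolding L_def
    by (simp add: lev.simps(1))
  define Z where "Z = {(\<Sum>q<length seq. \<Sum>a\<in>cls ! i. z q a) | z.
      (\<forall>q a. 0 \<le> z q a) \<and>
      (\<forall>q a. z q a \<noteq> 0 \<longrightarrow> q < length seq \<and> a \<in> seq ! q \<and> a \<in> cls ! i) \<and>
      (\<forall>q < length seq. (\<Sum>a\<in>cls ! i. z q a) \<le> y  q) \<and>
      (\<forall>a \<in> cls ! i. (\<Sum>q<length seq. z q a) \<le> 1)}"
  have opt: "opt_val cls seq i y = Sup Z" unfolding opt_val_def Z_def ..
  have Zne: "Z \<noteq> {}"
  proof -
    have "(\<Sum>q<length seq. \<Sum>a\<in>cls ! i. (\<lambda>q a. 0::real) q a) \<in> Z"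
      unfolding Z_def using y0 by (intro CollectI exI[of _ "\<lambda>q a. 0::real"]) auto
    then show ?thesis by blast
  qed
  have Zb: "v \<le> R * V" if "v \<in> Z" for v
  proof -
    obtain z where v: "v = (\<Sum>q<n. \<Sum>a\<in>A. z q a)" and z0: "\<forall>q a. 0 \<le> z q a"
      and zs: "\<forall>q a. z q a \<noteq> 0 \<longrightarrow> q < length seq \<and> a \<in> seq ! q \<and> a \<in> cls ! i"
      and zi: "\<forall>q < length seq. (\<Sum>a\<in>cls ! i. z q a) \<le> y  q"
      and za: "\<forall>a \<in> cls ! i. (\<Sum>q<length seq. z q a) \<le> 1"
      using \<open>v \<in> Z\<close> unfolding Z_def n_def A_def by blast
    have db: "(\<Sum>q<n. \<Sum>a\<in>A. z q a) \<le> (\<Sum>a\<in>A. psi g (L n a)) + (\<Sum>q<n. bf q * y q)"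
    proof (rule dual_bound)
      show "finite A" by (rule finA)
      show "\<forall>q a. 0 \<le> z q a" by (rule z0)
      show "\<forall>q<n. \<forall>a\<in>A. z q a \<noteq> 0 \<longrightarrow> 1 \<le> psi g (L (Suc q) a) + bf q"
        using zs bf unfolding A_def by auto
      show "\<forall>q<n. 0 \<le> bf q" using bf by auto
      show "\<forall>a\<in>A. (\<Sum>q<n. z q a) \<le> 1" using za unfolding n_def A_def by auto
      show "\<forall>q<n. (\<Sum>a\<in>A. z q a) \<le> y q" using zi unfolding A_def n_def by auto
      show "\<forall>a\<in>A. 0 \<le> psi g (L n a)" using lev01''[of n] psi_nonneg[OF gp] unfolding L_def n_def by auto
      show "\<forall>q<n. \<forall>a\<in>A. psi g (L (Suc q) a) \<le> psi g (L n a)"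
        using lev_mono'' psi_mono[OF gp] unfolding L_def n_def by (meson Suc_leI order_refl)
    qed
    have "v \<le> (\<Sum>q<n. (\<Sum>a\<in>A. psi g (L (Suc q) a) - psi g (L q a)) + y q * bf q)"
      using db tel v by (simp add: sum.distrib mult.commute)
    also have "\<dots> \<le> (\<Sum>q<n. R * (\<Sum>a\<in>A. dd cls g seq q a))"
      using bf by (intro sum_mono) auto
    also have "\<dots> = R * V" unfolding V_eq by (simp add: sum_distrib_left)
    finally show ?thesis .
  qed
  have "opt_val cls seq i y \<le> R * V" unfolding opt using Zne Zb by (rule cSup_least)
  moreover have c0: "0 \<le> 1 - exp (- g)" using gp by simp
  ultimately have "(1 - exp (- g)) * opt_val cls seq i y \<le> (1 - exp (- g)) * (R * V)"
    by (rule mult_left_mono)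
  also have "(1 - exp (- g)) * R = 1"
  proof -
    have e: "0 < exp g - 1" using gp by simp
    have "1 - exp (- g) = (exp g - 1) / exp g" by (simp add: exp_minus field_simps)
    then show ?thesis unfolding R_def using e by simp
  qed
  then have "(1 - exp (- g)) * (R * V) = V" by (metis mult.assoc mult_1)
  finally show ?thesis unfolding y_def V_def .
qed

end

theorem theorem4:
  fixes \<gamma> :: real
  assumes "0 \<le> \<gamma>" and "\<gamma> \<le> 1"
  shows "\<exists>P :: 'a online_alg pmf. valid_rand_alg P \<and>
           is_USW (1 - exp (\<gamma> - 1) / (\<gamma> + 1)) P \<and>
           is_CEF (1 - exp (- \<gamma>)) P"
proof (intro exI[of _ "return_pmf (algo \<gamma>)"] conjI)
  show "valid_rand_alg (return_pmf (algo \<gamma> :: 'a online_alg))"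
    unfolding valid_rand_alg_def valid_online_alg_def using valid assms by auto
  show "is_USW (1 - exp (\<gamma> - 1) / (\<gamma> + 1)) (return_pmf (algo \<gamma> :: 'a online_alg))"
    unfolding is_USW_def using usw_bound assms by auto
  show "is_CEF (1 - exp (- \<gamma>)) (return_pmf (algo \<gamma> :: 'a online_alg))"
    unfolding is_CEF_def
  proof (intro allI impI)
    fix cls seq :: "'a set list" and i j
    assume inst: "is_instance cls seq" and i: "i < length cls" and j: "j < length cls"
    show "measure_pmf.expectation (return_pmf (algo \<gamma>)) (\<lambda>alg. class_value cls seq (run alg cls seq) i)
        \<ge> (1 - exp (- \<gamma>)) * measure_pmf.expectation (return_pmf (algo \<gamma>))
              (\<lambda>alg. opt_val cls seq i (class_alloc cls (run alg cls seq) j))"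
    proof (cases "\<gamma> = 0")
      case True
      have "0 \<le> class_value cls seq (run (algo \<gamma>) cls seq) i"
        unfolding class_value_def agent_value_def run_algo
        using dd_nn[OF inst assms] by (auto intro!: sum_nonneg)
      then show ?thesis using True by simp
    next
      case False
      then have "0 < \<gamma>" using assms by simp
      then show ?thesis using cef_bound[OF inst _ assms(2) i j] by simp
    qed
  qed
qed


end
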